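(* The fixed points of the map $T_1$ (i.e. $F\in\Gamma_0(\mathbb{R}_+)$ with $T_1(F)=F$) are exactly the functions $F(s)=c|s-1|$ with $c\in[0,+\infty]$, where for $c=+\infty$ this means $F=I_{\{1\}}$ ($F(1)=0$, $F(s)=+\infty$ for $s\neq1$). Moreover, for $G\in\Gamma_0(\mathbb{R}_+)$, the marginal perspective function $H_G$ is a metric on $[0,+\infty)$ if and only if there is $c\in(0,+\infty)$ with $H_G(r,t)=c|r-t|$ for all $r,t\ge0$.
   Context: $\Gamma_0(\mathbb{R}_+)$ is the set of functions $F:[0,\infty)\to[0,\infty]$ that are convex, lower semicontinuous, with $F(1)=0$. For $F\in\Gamma_0(\mathbb{R}_+)$: $\mathrm{rec}(F)(r)=\lim_{\alpha\to\infty}F(1+\alpha r)/\alpha$; the perspective function is $\hat F(r,t)=tF(r/t)$ for $t>0$, $\hat F(r,0)=\mathrm{rec}(F)(r)$. The marginal perspective function $H_F$ is the lower semicontinuous envelope of $\tilde H_F(r_1,r_2)=\inf_{\theta>0}[\hat F(\theta,r_1)+\hat F(\theta,r_2)]$; it is symmetric, jointly convex, positively $1$-homogeneous and vanishes on the diagonal. $T_1(F)(s)=H_F(1,s)$. A metric on $[0,\infty)$ is a function $D:[0,\infty)^2\to[0,\infty)$ with $D(x,y)=0\iff x=y$, symmetric, satisfying the triangle inequality. *)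

theory Defs
  imports "HOL-Analysis.Analysis" "HOL-Library.Extended_Nonnegative_Real"
begin

text \<open>Functions [0,inf) -> [0,inf] are modelled as real => ennreal; only values on
  the nonnegative reals matter.\<close>

definition lsc_on :: "'a::topological_space set \<Rightarrow> ('a \<Rightarrow> ennreal) \<Rightarrow> bool" where
  "lsc_on S f \<longleftrightarrow> (\<forall>a. closedin (top_of_set S) {x\<in>S. f x \<le> a})"

definition Gamma0 :: "(real \<Rightarrow> ennreal) set" where
  "Gamma0 = {F. (\<forall>x\<ge>0. \<forall>y\<ge>0. \<forall>l::real. 0 \<le> l \<and> l \<le> 1 \<longrightarrow>
                    F ((1 - l) * x + l * y) \<le> ennreal (1 - l) * F x + ennreal l * F y)
              \<and> lsc_on {0..} F \<and> F 1 = 0}"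

definition recF :: "(real \<Rightarrow> ennreal) \<Rightarrow> real \<Rightarrow> ennreal" where
  "recF F r = Lim at_top (\<lambda>a::real. F (1 + a * r) / ennreal a)"

definition persp :: "(real \<Rightarrow> ennreal) \<Rightarrow> real \<Rightarrow> real \<Rightarrow> ennreal" where
  "persp F r t = (if t > 0 then ennreal t * F (r / t) else recF F r)"

definition Htilde :: "(real \<Rightarrow> ennreal) \<Rightarrow> real \<Rightarrow> real \<Rightarrow> ennreal" where
  "Htilde F r1 r2 = (INF \<theta>\<in>{0<..}. persp F \<theta> r1 + persp F \<theta> r2)"

definition quadrant :: "(real \<times> real) set" where
  "quadrant = {p. 0 \<le> fst p \<and> 0 \<le> snd p}"

definition HF :: "(real \<Rightarrow> ennreal) \<Rightarrow> real \<Rightarrow> real \<Rightarrow> ennreal" where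
  "HF F r1 r2 = (SUP g\<in>{g. lsc_on quadrant g \<and> (\<forall>p\<in>quadrant. g p \<le> Htilde F (fst p) (snd p))}.
                    g (r1, r2))"

definition T1 :: "(real \<Rightarrow> ennreal) \<Rightarrow> real \<Rightarrow> ennreal" where
  "T1 F s = HF F 1 s"

definition is_metric_nonneg :: "(real \<Rightarrow> real \<Rightarrow> ennreal) \<Rightarrow> bool" where
  "is_metric_nonneg D \<longleftrightarrow>
     (\<forall>x\<ge>0. \<forall>y\<ge>0. D x y < \<infinity>) \<and>
     (\<forall>x\<ge>0. \<forall>y\<ge>0. D x y = 0 \<longleftrightarrow> x = y) \<and>
     (\<forall>x\<ge>0. \<forall>y\<ge>0. D x y = D y x) \<and>
     (\<forall>x\<ge>0. \<forall>y\<ge>0. \<forall>z\<ge>0. D x z \<le> D x y + D y z)"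

end

theory Submission
  imports Defs
begin

lemma HF_le_Htilde:
  assumes "r \<ge> 0" "t \<ge> 0"
  shows "HF F r t \<le> Htilde F r t"
  unfolding HF_def using assms by (auto intro!: SUP_least simp: quadrant_def)

lemma HF_ge:
  assumes "lsc_on quadrant g" "\<forall>p\<in>quadrant. g p \<le> Htilde F (fst p) (snd p)"
  shows "g (r, t) \<le> HF F r t"
  unfolding HF_def by (rule SUP_upper) (use assms in auto)

lemma le_mult_INF:
  assumes "(k::real) > 0" "\<forall>\<theta>\<in>A. x \<le> ennreal k * f \<theta>"
  shows "x \<le> ennreal k * (INF \<theta>\<in>A. f \<theta>)"
proof -
  have kk: "ennreal (1/k) * ennreal k = 1"
    using assms(1) by (simp add: ennreal_mult'[symmetric])
  have "ennreal (1/k) * x \<le> f \<theta>" if "\<theta> \<in> A" for \<theta>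
  proof -
    have "ennreal (1/k) * x \<le> ennreal (1/k) * (ennreal k * f \<theta>)"
      using assms that by (intro mult_left_mono) auto
    also have "\<dots> = f \<theta>" by (simp add: mult.assoc[symmetric] kk)
    finally show ?thesis .
  qed
  then have "ennreal (1/k) * x \<le> (INF \<theta>\<in>A. f \<theta>)" by (auto intro: INF_greatest)
  then have "ennreal k * (ennreal (1/k) * x) \<le> ennreal k * (INF \<theta>\<in>A. f \<theta>)"
    by (intro mult_left_mono) auto
  moreover have "ennreal k * (ennreal (1/k) * x) = x"
    by (simp add: mult.assoc[symmetric] kk mult.commute[of "ennreal k"])
  ultimately show ?thesis by simp
qed

lemma ennreal_inv_mult_le_iff:
  assumes "(k::real) > 0"
  shows "ennreal (1/k) * z \<le> a \<longleftrightarrow> z \<le> ennreal k * a"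
proof -
  have kk: "ennreal (1/k) * ennreal k = 1"
    using assms by (simp add: ennreal_mult'[symmetric])
  have "ennreal (1/k) * z \<le> a \<longleftrightarrow> ennreal k * (ennreal (1/k) * z) \<le> ennreal k * a"
    using assms by (subst ennreal_mult_le_mult_iff) auto
  also have "ennreal k * (ennreal (1/k) * z) = z"
    by (simp add: mult.assoc[symmetric] kk mult.commute[of "ennreal k"])
  finally show ?thesis .
qed

lemma HF_transfer:
  fixes A :: "real \<times> real \<Rightarrow> real \<times> real"
  assumes cont: "continuous_on quadrant A" and AQ: "\<forall>p\<in>quadrant. A p \<in> quadrant"
   and E: "closedin (top_of_set quadrant) E" and k: "k > 0"
   and ineq: "\<forall>p\<in>quadrant - E. Htilde F (fst (A p)) (snd (A p)) \<le> ennreal k * Htilde F (fst p) (snd p)"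
   and p: "p \<in> quadrant - E"
  shows "HF F (fst (A p)) (snd (A p)) \<le> ennreal k * HF F (fst p) (snd p)"
proof -
  have EQ: "E \<subseteq> quadrant" using E closedin_imp_subset by auto
  have "g (fst (A p), snd (A p)) \<le> ennreal k * HF F (fst p) (snd p)"
    if g: "lsc_on quadrant g" "\<forall>q\<in>quadrant. g q \<le> Htilde F (fst q) (snd q)" for g
  proof -
    define g' where "g' q = (if q \<in> E then 0 else ennreal (1/k) * g (A q))" for q
    have "lsc_on quadrant g'"
      unfolding lsc_on_def
    proof
      fix a
      have eq: "{x \<in> quadrant. g' x \<le> a} = E \<union> (quadrant \<inter> A -` {y \<in> quadrant. g y \<le> ennreal k * a})"
        using EQ AQ by (auto simp: g'_def ennreal_inv_mult_le_iff[OF k])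
      have "closedin (top_of_set quadrant) {y \<in> quadrant. g y \<le> ennreal k * a}"
        using g(1) unfolding lsc_on_def by blast
      then have "closedin (top_of_set quadrant) (quadrant \<inter> A -` {y \<in> quadrant. g y \<le> ennreal k * a})"
        using cont AQ by (intro continuous_closedin_preimage_gen) auto
      then show "closedin (top_of_set quadrant) {x \<in> quadrant. g' x \<le> a}"
        unfolding eq using E by (intro closedin_Un) auto
    qed
    moreover have "\<forall>q\<in>quadrant. g' q \<le> Htilde F (fst q) (snd q)"
    proof
      fix q assume q: "q \<in> quadrant"
      show "g' q \<le> Htilde F (fst q) (snd q)"
      proof (cases "q \<in> E")
        case False
        have "g (A q) \<le> Htilde F (fst (A q)) (snd (A q))" using g(2) AQ q by blast
        also have "\<dots> \<le> ennreal k * Htilde F (fst q) (snd q)" using ineq q False by blast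
        finally show ?thesis using False by (simp add: g'_def ennreal_inv_mult_le_iff[OF k])
      qed (simp add: g'_def)
    qed
    ultimately have "g' (fst p, snd p) \<le> HF F (fst p) (snd p)" by (rule HF_ge)
    then have "ennreal (1/k) * g (A p) \<le> HF F (fst p) (snd p)" using p by (simp add: g'_def)
    then show ?thesis by (simp add: ennreal_inv_mult_le_iff[OF k])
  qed
  then show ?thesis unfolding HF_def[of F "fst (A p)"] by (auto intro!: SUP_least)
qed

lemma div_ennreal_eq: "(a::real) > 0 \<Longrightarrow> x / ennreal a = ennreal (1/a) * x"
  by (simp add: divide_ennreal_def inverse_ennreal mult.commute divide_inverse)

lemma Gamma0_conv:
  assumes "F \<in> Gamma0" "x \<ge> 0" "y \<ge> 0" "0 \<le> l" "l \<le> 1"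
  shows "F ((1 - l) * x + l * y) \<le> ennreal (1 - l) * F x + ennreal l * F y"
  using assms unfolding Gamma0_def by blast

lemma Gamma0_1: "F \<in> Gamma0 \<Longrightarrow> F 1 = 0"
  unfolding Gamma0_def by blast

lemma recF_mono:
  assumes F: "F \<in> Gamma0" and th: "\<theta> > 0" and ab: "0 < a" "a \<le> b"
  shows "F (1 + a * \<theta>) / ennreal a \<le> F (1 + b * \<theta>) / ennreal b"
proof -
  define l where "l = a / b"
  have l: "0 \<le> l" "l \<le> 1" using ab by (auto simp: l_def)
  have eq: "(1 - l) * 1 + l * (1 + b * \<theta>) = 1 + a * \<theta>"
    using ab by (simp add: l_def field_simps)
  have "F (1 + a * \<theta>) \<le> ennreal (1 - l) * F 1 + ennreal l * F (1 + b * \<theta>)"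
    using Gamma0_conv[OF F _ _ l, of 1 "1 + b * \<theta>"] th ab unfolding eq by simp
  then have "F (1 + a * \<theta>) \<le> ennreal l * F (1 + b * \<theta>)" using Gamma0_1[OF F] by simp
  then have "ennreal (1/a) * F (1 + a * \<theta>) \<le> ennreal (1/a) * (ennreal l * F (1 + b * \<theta>))"
    by (rule mult_left_mono) simp
  also have "\<dots> = ennreal (1/b) * F (1 + b * \<theta>)"
    using ab by (simp add: mult.assoc[symmetric] ennreal_mult'[symmetric] l_def)
  finally show ?thesis using ab by (simp add: div_ennreal_eq)
qed

lemma recF_SUP:
  assumes F: "F \<in> Gamma0" and th: "\<theta> > 0"
  shows "recF F \<theta> = (SUP a\<in>{0<..}. F (1 + a * \<theta>) / ennreal a)"
proof -
  define u where "u a = F (1 + a * \<theta>) / ennreal a" for a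
  define S where "S = (SUP a\<in>{0<..}. u a)"
  have "(u \<longlongrightarrow> S) at_top"
  proof (rule order_tendstoI)
    fix y assume "y < S"
    then obtain a0 where a0: "a0 > 0" "y < u a0" unfolding S_def by (auto simp: less_SUP_iff)
    have "eventually (\<lambda>a. a \<ge> a0) at_top" by (rule eventually_ge_at_top)
    then show "eventually (\<lambda>a. y < u a) at_top"
    proof eventually_elim
      case (elim a)
      have "u a0 \<le> u a" unfolding u_def using recF_mono[OF F th a0(1) elim] .
      then show ?case using a0(2) by order
    qed
  next
    fix y assume "S < y"
    have "eventually (\<lambda>a. a > (0::real)) at_top" by (rule eventually_gt_at_top)
    then show "eventually (\<lambda>a. u a < y) at_top"
    proof eventually_elim
      case (elim a)
      have "u a \<le> S" unfolding S_def using elim by (intro SUP_upper) auto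
      then show ?case using \<open>S < y\<close> by order
    qed
  qed
  then have "Lim at_top u = S" by (intro tendsto_Lim) auto
  then show ?thesis unfolding recF_def u_def S_def by simp
qed

lemma recF_scale_le:
  assumes F: "F \<in> Gamma0" and th: "\<theta> > 0" and k: "k > 0"
  shows "recF F (k * \<theta>) \<le> ennreal k * recF F \<theta>"
proof -
  have "F (1 + a * (k * \<theta>)) / ennreal a \<le> ennreal k * recF F \<theta>" if a: "a > 0" for a
  proof -
    have "F (1 + a * (k * \<theta>)) / ennreal a = ennreal k * (F (1 + (a * k) * \<theta>) / ennreal (a * k))"
    proof -
      have e1: "1 + a * (k * \<theta>) = 1 + (a * k) * \<theta>" by (simp add: mult.assoc)
      have e2: "ennreal (1/a) = ennreal k * ennreal (1 / (a * k))"
        using a k by (simp add: ennreal_mult'[symmetric])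
      show ?thesis using a k unfolding e1 by (simp add: div_ennreal_eq e2 mult.assoc)
    qed
    also have "\<dots> \<le> ennreal k * recF F \<theta>"
      unfolding recF_SUP[OF F th] using a k by (intro mult_left_mono SUP_upper) auto
    finally show ?thesis .
  qed
  then show ?thesis unfolding recF_SUP[OF F mult_pos_pos[OF k th]] by (auto intro: SUP_least)
qed

lemma persp_scale_le:
  assumes F: "F \<in> Gamma0" and th: "\<theta> > 0" and k: "k > 0" and r: "r \<ge> 0"
  shows "persp F (k * \<theta>) (k * r) \<le> ennreal k * persp F \<theta> r"
proof (cases "r > 0")
  case True
  then show ?thesis using k
    by (simp add: persp_def ennreal_mult' mult.assoc)
next
  case False
  then have "r = 0" using r by simp
  then show ?thesis using recF_scale_le[OF F th k] by (simp add: persp_def)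
qed

lemma Htilde_scale_le:
  assumes F: "F \<in> Gamma0" and k: "k > 0" and r: "r \<ge> 0" and t: "t \<ge> 0"
  shows "Htilde F (k * r) (k * t) \<le> ennreal k * Htilde F r t"
  unfolding Htilde_def[of F r t]
proof (rule le_mult_INF[OF k], intro ballI)
  fix \<theta> :: real assume "\<theta> \<in> {0<..}"
  then have th: "\<theta> > 0" by simp
  have "Htilde F (k * r) (k * t) \<le> persp F (k * \<theta>) (k * r) + persp F (k * \<theta>) (k * t)"
    unfolding Htilde_def using th k by (intro INF_lower) auto
  also have "\<dots> \<le> ennreal k * persp F \<theta> r + ennreal k * persp F \<theta> t"
    by (intro add_mono persp_scale_le[OF F th k] r t)
  also have "\<dots> = ennreal k * (persp F \<theta> r + persp F \<theta> t)" by (simp add: distrib_left)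
  finally show "Htilde F (k * r) (k * t) \<le> ennreal k * (persp F \<theta> r + persp F \<theta> t)" .
qed

lemma HF_scale_le:
  assumes F: "F \<in> Gamma0" and k: "k > 0" and r: "r \<ge> 0" and t: "t \<ge> 0"
  shows "HF F (k * r) (k * t) \<le> ennreal k * HF F r t"
proof -
  have "HF F (fst ((\<lambda>p. (k * fst p, k * snd p)) (r,t))) (snd ((\<lambda>p. (k * fst p, k * snd p)) (r,t)))
        \<le> ennreal k * HF F (fst (r,t)) (snd (r,t))"
  proof (rule HF_transfer[where E="{}"])
    show "continuous_on quadrant (\<lambda>p. (k * fst p, k * snd p))" by (intro continuous_intros)
    show "\<forall>p\<in>quadrant. (k * fst p, k * snd p) \<in> quadrant" using k by (auto simp: quadrant_def)
    show "\<forall>p\<in>quadrant - {}. Htilde F (fst (k * fst p, k * snd p)) (snd (k * fst p, k * snd p))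
          \<le> ennreal k * Htilde F (fst p) (snd p)"
      using Htilde_scale_le[OF F k] by (auto simp: quadrant_def)
  qed (use k r t in \<open>auto simp: quadrant_def\<close>)
  then show ?thesis by simp
qed

lemma HF_scale:
  assumes F: "F \<in> Gamma0" and k: "k > 0" and r: "r \<ge> 0" and t: "t \<ge> 0"
  shows "HF F (k * r) (k * t) = ennreal k * HF F r t"
proof (rule antisym)
  show "HF F (k * r) (k * t) \<le> ennreal k * HF F r t" by (rule HF_scale_le[OF assms])
  have "HF F r t = HF F ((1/k) * (k * r)) ((1/k) * (k * t))" using k by simp
  also have "\<dots> \<le> ennreal (1/k) * HF F (k * r) (k * t)"
    using k r t by (intro HF_scale_le[OF F]) auto
  finally have "ennreal k * HF F r t \<le> ennreal k * (ennreal (1/k) * HF F (k * r) (k * t))"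
    by (rule mult_left_mono) simp
  also have "\<dots> = HF F (k * r) (k * t)"
    using k by (simp add: mult.assoc[symmetric] ennreal_mult'[symmetric])
  finally show "ennreal k * HF F r t \<le> HF F (k * r) (k * t)" .
qed

lemma persp_conv:
  assumes F: "F \<in> Gamma0" and s1: "s1 > 0" and s2: "s2 > 0" and t1: "\<theta>1 \<ge> 0" and t2: "\<theta>2 \<ge> 0"
    and l: "0 \<le> l" "l \<le> 1"
    and s: "s = (1 - l) * s1 + l * s2" and th: "\<theta> = (1 - l) * \<theta>1 + l * \<theta>2"
  shows "ennreal s * F (\<theta> / s) \<le> ennreal ((1 - l) * s1) * F (\<theta>1 / s1) + ennreal (l * s2) * F (\<theta>2 / s2)"
proof -
  have sp: "s > 0"
  proof (cases "l = 1")
    case True then show ?thesis using s s2 by simp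
  next
    case False
    then have "(1 - l) * s1 > 0" using l s1 by simp
    moreover have "l * s2 \<ge> 0" using l s2 by simp
    ultimately show ?thesis using s by linarith
  qed
  define m where "m = l * s2 / s"
  have m1: "1 - m = (1 - l) * s1 / s" using sp s by (simp add: m_def field_simps)
  have "l * s2 \<le> s" using s l s1 by (simp add: mult_nonneg_nonneg)
  then have m: "0 \<le> m" "m \<le> 1" using sp l s1 s2 by (auto simp: m_def)
  have "(1 - m) * (\<theta>1 / s1) = (1 - l) * \<theta>1 / s" unfolding m1 using s1 by simp
  moreover have "m * (\<theta>2 / s2) = l * \<theta>2 / s" unfolding m_def using s2 by simp
  ultimately have eq: "(1 - m) * (\<theta>1 / s1) + m * (\<theta>2 / s2) = \<theta> / s"
    using th by (simp add: add_divide_distrib)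
  have "F (\<theta> / s) \<le> ennreal (1 - m) * F (\<theta>1 / s1) + ennreal m * F (\<theta>2 / s2)"
    using Gamma0_conv[OF F _ _ m, of "\<theta>1/s1" "\<theta>2/s2"] t1 t2 s1 s2 unfolding eq by simp
  then have "ennreal s * F (\<theta> / s) \<le> ennreal s * (ennreal (1 - m) * F (\<theta>1 / s1) + ennreal m * F (\<theta>2 / s2))"
    by (rule mult_left_mono) simp
  also have "\<dots> = ennreal (s * (1 - m)) * F (\<theta>1 / s1) + ennreal (s * m) * F (\<theta>2 / s2)"
    using sp m by (simp add: distrib_left mult.assoc ennreal_mult)
  also have "s * (1 - m) = (1 - l) * s1" using sp m1 by simp
  also have "s * m = l * s2" using sp by (simp add: m_def)
  finally show ?thesis .
qed

lemma Htilde_radial: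
  assumes F: "F \<in> Gamma0" and r: "r > 0" and t: "t > 0" and l: "0 < l" "l < 1"
  shows "Htilde F r ((1 - l) * r + l * t) \<le> ennreal l * Htilde F r t"
  unfolding Htilde_def[of F r t]
proof (rule le_mult_INF[OF l(1)], intro ballI)
  fix \<theta> :: real assume "\<theta> \<in> {0<..}"
  then have th: "\<theta> > 0" by simp
  define \<theta>' where "\<theta>' = (1 - l) * r + l * \<theta>"
  define v where "v = (1 - l) * r + l * t"
  have th': "\<theta>' > 0" using l r th by (auto simp: \<theta>'_def intro: add_pos_pos)
  have v: "v > 0" using l r t by (auto simp: v_def intro: add_pos_pos)
  have F1: "F 1 = 0" using Gamma0_1[OF F] .
  have "persp F \<theta>' r = ennreal r * F (\<theta>' / r)" using r by (simp add: persp_def)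
  also have "\<dots> \<le> ennreal ((1 - l) * r) * F (r / r) + ennreal (l * r) * F (\<theta> / r)"
    by (rule persp_conv[OF F r r]) (use r th l in \<open>auto simp: \<theta>'_def algebra_simps\<close>)
  also have "\<dots> = ennreal l * persp F \<theta> r"
    using r l by (simp add: F1 persp_def ennreal_mult mult.assoc)
  finally have p1: "persp F \<theta>' r \<le> ennreal l * persp F \<theta> r" .
  have "persp F \<theta>' v = ennreal v * F (\<theta>' / v)" using v by (simp add: persp_def)
  also have "\<dots> \<le> ennreal ((1 - l) * r) * F (r / r) + ennreal (l * t) * F (\<theta> / t)"
    by (rule persp_conv[OF F r t]) (use r th l in \<open>auto simp: \<theta>'_def v_def\<close>)
  also have "\<dots> = ennreal l * persp F \<theta> t"
    using r t l by (simp add: F1 persp_def ennreal_mult mult.assoc)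
  finally have p2: "persp F \<theta>' v \<le> ennreal l * persp F \<theta> t" .
  have "Htilde F r v \<le> persp F \<theta>' r + persp F \<theta>' v"
    unfolding Htilde_def using th' by (intro INF_lower) auto
  also have "\<dots> \<le> ennreal l * persp F \<theta> r + ennreal l * persp F \<theta> t" by (intro add_mono p1 p2)
  also have "\<dots> = ennreal l * (persp F \<theta> r + persp F \<theta> t)" by (simp add: distrib_left)
  finally show "Htilde F r ((1 - l) * r + l * t) \<le> ennreal l * (persp F \<theta> r + persp F \<theta> t)"
    by (simp add: v_def)
qed

lemma HF_radial:
  assumes F: "F \<in> Gamma0" and y: "y > 0" and l: "0 < l" "l < 1"
  shows "HF F 1 ((1 - l) + l * y) \<le> ennreal l * HF F 1 y"
proof -
  define A where "A = (\<lambda>p::real\<times>real. (fst p, (1 - l) * fst p + l * snd p))"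
  define E where "E = quadrant \<inter> ({p::real\<times>real. fst p = 0} \<union> {p. snd p = 0})"
  have c: "continuous_on quadrant A" unfolding A_def by (intro continuous_intros)
  have AQ: "\<forall>p\<in>quadrant. A p \<in> quadrant" using l by (auto simp: quadrant_def A_def)
  have "closed ({p::real\<times>real. fst p = 0} \<union> {p. snd p = 0})"
    by (intro closed_Un closed_Collect_eq continuous_intros)
  then have Ec: "closedin (top_of_set quadrant) E" unfolding E_def
    by (intro closedin_closed_Int)
  have ineq: "\<forall>p\<in>quadrant - E. Htilde F (fst (A p)) (snd (A p)) \<le> ennreal l * Htilde F (fst p) (snd p)"
  proof
    fix p assume p: "p \<in> quadrant - E"
    then have "fst p > 0" "snd p > 0" by (auto simp: E_def quadrant_def less_le)
    then show "Htilde F (fst (A p)) (snd (A p)) \<le> ennreal l * Htilde F (fst p) (snd p)"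
      using Htilde_radial[OF F _ _ l] by (simp add: A_def)
  qed
  have pE: "(1, y) \<in> quadrant - E" using y by (auto simp: quadrant_def E_def)
  from HF_transfer[OF c AQ Ec l(1) ineq pE] show ?thesis by (simp add: A_def)
qed

lemma key_form:
  fixes F :: "real \<Rightarrow> ennreal"
  assumes F1: "F 1 = 0"
  and sq: "\<forall>x>1. F (x*x) \<le> F x + ennreal x * F x"
  and sym: "\<forall>s. 0<s \<and> s<1 \<longrightarrow> F s = ennreal s * F (1/s)"
  and rad: "\<forall>x y. 1<x \<and> x<y \<longrightarrow> F x \<le> ennreal ((x-1)/(y-1)) * F y"
  shows "\<exists>c. \<forall>s>0. F s = c * ennreal \<bar>s-1\<bar>"
proof -
  define R where "R x = F x * ennreal (1/(x-1))" for x
  have mono: "R x \<le> R y" if xy: "1 < x" "x \<le> y" for x y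
  proof (cases "x = y")
    case False
    then have "x < y" using xy by simp
    then have "F x \<le> ennreal ((x-1)/(y-1)) * F y" using rad xy by blast
    then have "R x \<le> ennreal ((x-1)/(y-1)) * F y * ennreal (1/(x-1))"
      unfolding R_def by (rule mult_right_mono) simp
    also have "\<dots> = F y * (ennreal ((x-1)/(y-1)) * ennreal (1/(x-1)))"
      by (simp add: ac_simps)
    also have "ennreal ((x-1)/(y-1)) * ennreal (1/(x-1)) = ennreal ((x-1)/(y-1) * (1/(x-1)))"
      using xy by (subst ennreal_mult) auto
    also have "(x-1)/(y-1) * (1/(x-1)) = 1/(y-1)" using xy by (simp add: field_simps)
    finally show ?thesis by (simp add: R_def)
  qed simp
  have sqR: "R (x*x) \<le> R x" if x: "x > 1" for x
  proof -
    have "F (x*x) \<le> F x + ennreal x * F x" using sq x by blast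
    also have "\<dots> = ennreal (1 + x) * F x"
    proof -
      have "ennreal (1 + x) = 1 + ennreal x" using x by (subst ennreal_plus) auto
      then show ?thesis by (simp add: distrib_right)
    qed
    finally have "R (x*x) \<le> ennreal (1 + x) * F x * ennreal (1/(x*x-1))"
      unfolding R_def by (rule mult_right_mono) simp
    also have "\<dots> = F x * (ennreal (1 + x) * ennreal (1/(x*x-1)))"
      by (simp add: ac_simps)
    also have "ennreal (1 + x) * ennreal (1/(x*x-1)) = ennreal ((1 + x) * (1/(x*x-1)))"
      using x by (subst ennreal_mult) (auto simp: less_1_mult intro: less_imp_le)
    also have "(1 + x) * (1/(x*x-1)) = 1/(x-1)"
    proof -
      have "x*x - 1 = (1 + x) * (x - 1)" by (simp add: algebra_simps)
      then show ?thesis using x by simp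
    qed
    finally show ?thesis by (simp add: R_def)
  qed
  have pw: "x ^ (2^n) > 1 \<and> R (x ^ (2^n)) \<le> R x" if x: "x > 1" for x n
  proof (induction n)
    case 0 then show ?case using x by simp
  next
    case (Suc n)
    have e: "x ^ (2 ^ Suc n) = x ^ (2^n) * x ^ (2^n)"
      by (simp add: power_add[symmetric] mult_2)
    have "1 < x ^ (2^n) * x ^ (2^n)" using Suc by (simp add: less_1_mult)
    moreover have "R (x ^ (2^n) * x ^ (2^n)) \<le> R x" using sqR[of "x ^ (2^n)"] Suc by (meson order_trans)
    ultimately show ?case unfolding e by simp
  qed
  have const: "R x \<le> R y" if x: "x > 1" and y: "y > 1" for x y
  proof (cases "x \<le> y")
    case True then show ?thesis using mono x by simp
  next
    case False
    obtain n where n: "x < y ^ n" using real_arch_pow[OF y] by blast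
    have "y ^ n \<le> y ^ (2^n)" using y by (intro power_increasing) (auto intro: less_imp_le less_exp)
    then have "R x \<le> R (y ^ (2^n))" using n x by (intro mono) auto
    also have "\<dots> \<le> R y" using pw[OF y] by blast
    finally show ?thesis .
  qed
  define c where "c = R 2"
  have big: "F x = c * ennreal (x - 1)" if x: "x > 1" for x
  proof -
    have "R x = c" unfolding c_def using const[of x 2] const[of 2 x] x by (simp add: antisym)
    moreover have "F x = R x * ennreal (x - 1)"
      using x by (simp add: R_def mult.assoc ennreal_mult[symmetric])
    ultimately show ?thesis by simp
  qed
  have "F s = c * ennreal \<bar>s-1\<bar>" if s: "s > 0" for s
  proof -
    consider "s > 1" | "s = 1" | "s < 1" by linarith
    then show ?thesis
    proof cases
      case 1 then show ?thesis using big by simp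
    next
      case 2 then show ?thesis using F1 by simp
    next
      case 3
      have "F s = ennreal s * F (1/s)" using sym s 3 by blast
      also have "\<dots> = ennreal s * (c * ennreal (1/s - 1))" using big[of "1/s"] s 3 by simp
      also have "\<dots> = c * (ennreal s * ennreal (1/s - 1))"
        by (simp add: ac_simps)
      also have "ennreal s * ennreal (1/s - 1) = ennreal (s * (1/s - 1))"
        using s 3 by (subst ennreal_mult) auto
      also have "s * (1/s - 1) = \<bar>s - 1\<bar>" using s 3 by (simp add: field_simps)
      finally show ?thesis .
    qed
  qed
  then show ?thesis by blast
qed

lemma part1_fwd:
  assumes F: "F \<in> Gamma0" and fp: "\<forall>s\<ge>0. T1 F s = F s"
  shows "\<exists>c::ennreal. \<forall>s\<ge>0. F s = c * ennreal \<bar>s - 1\<bar>"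
proof -
  have F1: "F 1 = 0" using Gamma0_1[OF F] .
  have raw: "F s \<le> F \<theta> + ennreal s * F (\<theta>/s)" if th: "\<theta> > 0" and s: "s > 0" for \<theta> s
  proof -
    have "F s = HF F 1 s" using fp s by (simp add: T1_def)
    also have "\<dots> \<le> Htilde F 1 s" using s by (intro HF_le_Htilde) auto
    also have "\<dots> \<le> persp F \<theta> 1 + persp F \<theta> s" unfolding Htilde_def using th by (intro INF_lower) auto
    also have "\<dots> = F \<theta> + ennreal s * F (\<theta>/s)" using s by (simp add: persp_def)
    finally show ?thesis .
  qed
  have a: "F s \<le> ennreal s * F (1/s)" if s: "s > 0" for s
    using raw[of 1 s] s F1 by simp
  have sym: "F s = ennreal s * F (1/s)" if s: "0 < s" "s < 1" for s
  proof (rule antisym)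
    show "F s \<le> ennreal s * F (1/s)" using a s by simp
    have "F (1/s) \<le> ennreal (1/s) * F s" using a[of "1/s"] s by simp
    then have "ennreal s * F (1/s) \<le> ennreal s * (ennreal (1/s) * F s)" by (rule mult_left_mono) simp
    also have "\<dots> = F s" using s by (simp add: mult.assoc[symmetric] ennreal_mult'[symmetric])
    finally show "ennreal s * F (1/s) \<le> F s" .
  qed
  have sq: "\<forall>x>1. F (x*x) \<le> F x + ennreal x * F x"
  proof (intro allI impI)
    fix x :: real assume x: "x > 1"
    have "F (x*x) \<le> F x + ennreal (x*x) * F (x/(x*x))" using raw[of x "x*x"] x by simp
    also have "x/(x*x) = 1/x" using x by simp
    also have "F (1/x) = ennreal (1/x) * F x" using sym[of "1/x"] x by simp
    also have "ennreal (x*x) * (ennreal (1/x) * F x) = ennreal x * F x"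
      using x by (simp add: mult.assoc[symmetric] ennreal_mult'[symmetric])
    finally show "F (x*x) \<le> F x + ennreal x * F x" .
  qed
  have rad: "\<forall>x y. 1<x \<and> x<y \<longrightarrow> F x \<le> ennreal ((x-1)/(y-1)) * F y"
  proof (intro allI impI)
    fix x y :: real assume xy: "1 < x \<and> x < y"
    define l where "l = (x-1)/(y-1)"
    have l: "0 \<le> l" "l \<le> 1" using xy by (auto simp: l_def)
    have e1: "l * (y - 1) = x - 1" using xy by (simp add: l_def)
    have e: "(1 - l) * 1 + l * y = x" using e1 by (simp add: algebra_simps)
    have "F ((1 - l) * 1 + l * y) \<le> ennreal (1 - l) * F 1 + ennreal l * F y"
      using Gamma0_conv[OF F _ _ l, of 1 y] xy by simp
    then show "F x \<le> ennreal ((x-1)/(y-1)) * F y" unfolding e using F1 by (simp add: l_def)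
  qed
  obtain c where c: "\<forall>s>0. F s = c * ennreal \<bar>s-1\<bar>"
    using key_form[OF F1 sq _ rad] sym by blast
  have "c \<le> F 0"
  proof -
    have "F ((1 - 1/2) * 0 + (1/2) * 1) \<le> ennreal (1 - 1/2) * F 0 + ennreal (1/2) * F 1"
      using Gamma0_conv[OF F, of 0 1 "1/2"] by (simp del: Gamma0_1)
    then have "ennreal (1/2) * c \<le> ennreal (1/2) * F 0" using c F1 by (simp add: mult.commute)
    then show ?thesis by (subst (asm) ennreal_mult_le_mult_iff) auto
  qed
  moreover have "F 0 \<le> c"
  proof -
    have "closedin (top_of_set {0..}) {x\<in>{0..}. F x \<le> c}"
      using F unfolding Gamma0_def lsc_on_def by blast
    then have cl: "closed {x\<in>{0::real..}. F x \<le> c}" by (rule closedin_closed_trans) simp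
    have "(\<lambda>n. inverse (real (Suc n))) \<longlonglongrightarrow> 0" by (rule LIMSEQ_inverse_real_of_nat)
    moreover have "inverse (real (Suc n)) \<in> {x\<in>{0::real..}. F x \<le> c}" for n
    proof -
      have p: "inverse (real (Suc n)) > 0" by simp
      have "\<bar>inverse (real (Suc n)) - 1\<bar> \<le> 1" by (simp add: field_simps)
      then have "c * ennreal \<bar>inverse (real (Suc n)) - 1\<bar> \<le> c * 1"
        by (intro mult_left_mono) (auto simp: ennreal_le_1)
      then show ?thesis using c p by simp
    qed
    ultimately have "0 \<in> {x\<in>{0::real..}. F x \<le> c}"
      using cl closed_sequentially[of "{x\<in>{0::real..}. F x \<le> c}" "\<lambda>n. inverse (real (Suc n))" 0] by blast
    then show ?thesis by simp
  qed
  ultimately have "F 0 = c" by simp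
  have "F s = c * ennreal \<bar>s - 1\<bar>" if s: "s \<ge> 0" for s
  proof (cases "s = 0")
    case True then show ?thesis using \<open>F 0 = c\<close> by simp
  next
    case False then show ?thesis using c s by simp
  qed
  then show ?thesis by blast
qed

lemma form_lsc:
  shows "lsc_on quadrant (\<lambda>p. c * ennreal \<bar>fst p - snd p\<bar>)"
  unfolding lsc_on_def
proof
  fix a :: ennreal
  show "closedin (top_of_set quadrant) {x \<in> quadrant. c * ennreal \<bar>fst x - snd x\<bar> \<le> a}"
  proof (cases "a = top")
    case True then show ?thesis by simp
  next
    case aT: False
    then obtain a' where a': "a = ennreal a'" "a' \<ge> 0" by (cases a) auto
    show ?thesis
    proof (cases "c = top")
      case True
      have "{x \<in> quadrant. c * ennreal \<bar>fst x - snd x\<bar> \<le> a} = quadrant \<inter> {x. fst x = snd x}"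
        using True aT by (auto simp: ennreal_top_mult top_unique)
      moreover have "closed {x::real\<times>real. fst x = snd x}"
        by (intro closed_Collect_eq continuous_intros)
      ultimately show ?thesis by (simp add: closedin_closed_Int)
    next
      case False
      then obtain c' where c': "c = ennreal c'" "c' \<ge> 0" by (cases c) auto
      have "{x \<in> quadrant. c * ennreal \<bar>fst x - snd x\<bar> \<le> a} = quadrant \<inter> {x. c' * \<bar>fst x - snd x\<bar> \<le> a'}"
        using c' a' by (auto simp: ennreal_mult[symmetric] ennreal_le_iff)
      moreover have "closed {x::real\<times>real. c' * \<bar>fst x - snd x\<bar> \<le> a'}"
        by (intro closed_Collect_le continuous_intros)
      ultimately show ?thesis by (simp add: closedin_closed_Int)
    qed
  qed
qed

lemma part1_bwd:
  assumes F: "F \<in> Gamma0" and c: "\<forall>s\<ge>0. F s = c * ennreal \<bar>s - 1\<bar>"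
  shows "\<forall>s\<ge>0. T1 F s = F s"
proof -
  have rec: "recF F \<theta> = c * ennreal \<theta>" if th: "\<theta> > 0" for \<theta>
  proof -
    have "F (1 + a * \<theta>) / ennreal a = c * ennreal \<theta>" if a: "a \<in> {0<..}" for a
    proof -
      have "F (1 + a * \<theta>) = c * ennreal (a * \<theta>)" using c a th by simp
      moreover have "ennreal (1/a) * (c * ennreal (a * \<theta>)) = c * (ennreal (1/a) * ennreal (a * \<theta>))"
        by (simp add: ac_simps)
      moreover have "ennreal (1/a) * ennreal (a * \<theta>) = ennreal (1/a * (a * \<theta>))"
        by (rule ennreal_mult[symmetric]) (use a th in auto)
      moreover have "1/a * (a * \<theta>) = \<theta>" using a by simp
      ultimately show ?thesis using a by (simp add: div_ennreal_eq)
    qed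
    then show ?thesis unfolding recF_SUP[OF F th] by (subst SUP_cong[OF refl]) auto
  qed
  have persp: "persp F \<theta> r = c * ennreal \<bar>\<theta> - r\<bar>" if th: "\<theta> > 0" and r: "r \<ge> 0" for \<theta> r
  proof (cases "r > 0")
    case True
    have "persp F \<theta> r = ennreal r * (c * ennreal \<bar>\<theta>/r - 1\<bar>)" using True c th by (simp add: persp_def)
    also have "\<dots> = c * ennreal (r * \<bar>\<theta>/r - 1\<bar>)" using True by (simp add: ennreal_mult ac_simps)
    also have "r * \<bar>\<theta>/r - 1\<bar> = \<bar>\<theta> - r\<bar>"
    proof -
      have "r * \<bar>\<theta>/r - 1\<bar> = \<bar>r * (\<theta>/r - 1)\<bar>" using True by (simp add: abs_mult)
      also have "r * (\<theta>/r - 1) = \<theta> - r" using True by (simp add: field_simps)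
      finally show ?thesis .
    qed
    finally show ?thesis .
  next
    case False
    then have "r = 0" using r by simp
    then show ?thesis using rec th by (simp add: persp_def)
  qed
  show ?thesis
  proof (intro allI impI)
    fix s :: real assume s: "s \<ge> 0"
    have up: "T1 F s \<le> F s"
    proof -
      have "T1 F s \<le> Htilde F 1 s" unfolding T1_def using s by (intro HF_le_Htilde) auto
      also have "\<dots> \<le> F s"
      proof (cases "s > 0")
        case True
        have "Htilde F 1 s \<le> persp F s 1 + persp F s s" unfolding Htilde_def using True by (intro INF_lower) auto
        also have "\<dots> = F s" using persp True c by (simp add: abs_minus_commute)
        finally show ?thesis .
      next
        case False
        then have s0: "s = 0" using s by simp
        have "Htilde F 1 s \<le> persp F 1 1 + persp F 1 s" unfolding Htilde_def by (intro INF_lower) auto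
        also have "\<dots> = F s" using persp s0 c by simp
        finally show ?thesis .
      qed
      finally show ?thesis .
    qed
    have lo: "F s \<le> T1 F s"
    proof -
      have "(\<lambda>p. c * ennreal \<bar>fst p - snd p\<bar>) (1, s) \<le> HF F 1 s"
      proof (rule HF_ge[OF form_lsc], intro ballI)
        fix p :: "real \<times> real" assume p: "p \<in> quadrant"
        show "c * ennreal \<bar>fst p - snd p\<bar> \<le> Htilde F (fst p) (snd p)"
          unfolding Htilde_def
        proof (rule INF_greatest)
          fix \<theta> :: real assume "\<theta> \<in> {0<..}"
          then have th: "\<theta> > 0" by simp
          have "c * ennreal \<bar>fst p - snd p\<bar> \<le> c * ennreal (\<bar>\<theta> - fst p\<bar> + \<bar>\<theta> - snd p\<bar>)"
            by (intro mult_left_mono ennreal_leI) auto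
          also have "\<dots> = persp F \<theta> (fst p) + persp F \<theta> (snd p)"
          proof -
            have "ennreal (\<bar>\<theta> - fst p\<bar> + \<bar>\<theta> - snd p\<bar>) = ennreal \<bar>\<theta> - fst p\<bar> + ennreal \<bar>\<theta> - snd p\<bar>"
              by (rule ennreal_plus) auto
            then show ?thesis using persp[OF th] p by (simp add: quadrant_def distrib_left)
          qed
          finally show "c * ennreal \<bar>fst p - snd p\<bar> \<le> persp F \<theta> (fst p) + persp F \<theta> (snd p)" .
        qed
      qed
      then show ?thesis using c s by (simp add: T1_def abs_minus_commute)
    qed
    show "T1 F s = F s" using up lo by (rule antisym)
  qed
qed

lemma part2_bwd:
  assumes c: "0 < c" and H: "\<forall>r\<ge>0. \<forall>t\<ge>0. HF G r t = ennreal (c * \<bar>r - t\<bar>)"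
  shows "is_metric_nonneg (HF G)"
  unfolding is_metric_nonneg_def
proof (intro conjI allI impI)
  fix x y :: real assume x: "x \<ge> 0" and y: "y \<ge> 0"
  show "HF G x y < \<infinity>" using H x y by simp
  show "HF G x y = HF G y x" using H x y by (simp add: abs_minus_commute)
  have e: "HF G x y = ennreal (c * \<bar>x - y\<bar>)" using H x y by simp
  show "(HF G x y = 0) = (x = y)"
  proof (cases "x = y")
    case True then show ?thesis using e by simp
  next
    case False
    then have "0 < c * \<bar>x - y\<bar>" using c by simp
    then show ?thesis using e False by (simp add: ennreal_eq_0_iff)
  qed
  fix z :: real assume z: "z \<ge> 0"
  have "ennreal (c * \<bar>x - z\<bar>) \<le> ennreal (c * \<bar>x - y\<bar> + c * \<bar>y - z\<bar>)"
    using c by (intro ennreal_leI) (simp add: distrib_left[symmetric] mult_left_mono)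
  also have "\<dots> = ennreal (c * \<bar>x - y\<bar>) + ennreal (c * \<bar>y - z\<bar>)"
    using c by (intro ennreal_plus) auto
  finally show "HF G x z \<le> HF G x y + HF G y z" using H x y z by simp
qed

lemma part2_fwd:
  assumes G: "G \<in> Gamma0" and M: "is_metric_nonneg (HF G)"
  shows "\<exists>c::real. 0 < c \<and> (\<forall>r\<ge>0. \<forall>t\<ge>0. HF G r t = ennreal (c * \<bar>r - t\<bar>))"
proof -
  have M1: "\<forall>x\<ge>0. \<forall>y\<ge>0. HF G x y < \<infinity>" using M unfolding is_metric_nonneg_def by (rule conjunct1)
  have M2: "\<forall>x\<ge>0. \<forall>y\<ge>0. HF G x y = 0 \<longleftrightarrow> x = y" using M[unfolded is_metric_nonneg_def] by (elim conjE) assumption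
  have M3: "\<forall>x\<ge>0. \<forall>y\<ge>0. HF G x y = HF G y x" using M[unfolded is_metric_nonneg_def] by (elim conjE) assumption
  have M4: "\<forall>x\<ge>0. \<forall>y\<ge>0. \<forall>z\<ge>0. HF G x z \<le> HF G x y + HF G y z" using M[unfolded is_metric_nonneg_def] by (elim conjE) assumption
  have fin: "HF G x y < \<infinity>" if "x \<ge> 0" "y \<ge> 0" for x y using M1 that by blast
  have zero: "HF G x y = 0 \<longleftrightarrow> x = y" if "x \<ge> 0" "y \<ge> 0" for x y using M2 that by blast
  have symm: "HF G x y = HF G y x" if "x \<ge> 0" "y \<ge> 0" for x y using M3 that by blast
  have tri: "HF G x z \<le> HF G x y + HF G y z" if "x \<ge> 0" "y \<ge> 0" "z \<ge> 0" for x y z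
    using M4 that by blast
  define F where "F s = HF G 1 s" for s
  have F1: "F 1 = 0" using zero[of 1 1] by (simp add: F_def)
  have sq: "\<forall>x>1. F (x*x) \<le> F x + ennreal x * F x"
  proof (intro allI impI)
    fix x :: real assume x: "x > 1"
    have "HF G 1 (x*x) \<le> HF G 1 x + HF G x (x*x)" using x by (intro tri) auto
    also have "HF G x (x*x) = ennreal x * HF G 1 x" using HF_scale[OF G, of x 1 x] x by simp
    finally show "F (x*x) \<le> F x + ennreal x * F x" by (simp add: F_def)
  qed
  have sym: "\<forall>s. 0<s \<and> s<1 \<longrightarrow> F s = ennreal s * F (1/s)"
  proof (intro allI impI)
    fix s :: real assume s: "0<s \<and> s<1"
    have "HF G 1 s = HF G s 1" using s by (intro symm) auto
    also have "\<dots> = HF G (s*1) (s*(1/s))" using s by simp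
    also have "\<dots> = ennreal s * HF G 1 (1/s)" using s by (intro HF_scale[OF G]) auto
    finally show "F s = ennreal s * F (1/s)" by (simp add: F_def)
  qed
  have rad: "\<forall>x y. 1<x \<and> x<y \<longrightarrow> F x \<le> ennreal ((x-1)/(y-1)) * F y"
  proof (intro allI impI)
    fix x y :: real assume xy: "1 < x \<and> x < y"
    define l where "l = (x-1)/(y-1)"
    have l: "0 < l" "l < 1" using xy by (auto simp: l_def)
    have e1: "l * (y - 1) = x - 1" using xy by (simp add: l_def)
    have e: "(1 - l) + l * y = x" using e1 by (simp add: algebra_simps)
    have "HF G 1 ((1 - l) + l * y) \<le> ennreal l * HF G 1 y" using xy by (intro HF_radial[OF G _ l]) auto
    then show "F x \<le> ennreal ((x-1)/(y-1)) * F y" unfolding e by (simp add: F_def l_def)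
  qed
  obtain c where c: "\<forall>s>0. F s = c * ennreal \<bar>s-1\<bar>"
    using key_form[OF F1 sq sym rad] by blast
  have F2: "F 2 = c" using c by simp
  have "c \<noteq> top" using fin[of 1 2] F2 by (simp add: F_def)
  then obtain c' where c': "c = ennreal c'" "c' \<ge> 0" by (cases c) auto
  have "c \<noteq> 0" using zero[of 1 2] F2 by (simp add: F_def)
  then have c'p: "c' > 0" using c' by (auto simp: less_le)
  have Fpos: "HF G 1 s = ennreal (c' * \<bar>s - 1\<bar>)" if "s > 0" for s
    using c that c' by (simp add: F_def ennreal_mult)
  obtain h where h: "HF G 1 0 = ennreal h" "h \<ge> 0"
    using fin[of 1 0] by (cases "HF G 1 0") auto
  have s0: "HF G s 0 = ennreal (s * h)" if "s > 0" for s
    using HF_scale[OF G, of s 1 0] that h by (simp add: ennreal_mult)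
  have "h \<le> c'"
  proof -
    have "HF G 1 0 \<le> HF G 1 (1/2) + HF G (1/2) 0" by (intro tri) auto
    also have "\<dots> = ennreal (c' * (1/2)) + ennreal ((1/2) * h)" using Fpos[of "1/2"] s0[of "1/2"] by simp
    also have "\<dots> = ennreal (c' * (1/2) + (1/2) * h)" using c' h by (intro ennreal_plus[symmetric]) auto
    finally have "ennreal h \<le> ennreal (c' * (1/2) + (1/2) * h)" using h by simp
    then have "h \<le> c' * (1/2) + (1/2) * h" using c' h by (subst (asm) ennreal_le_iff) auto
    then show ?thesis by simp
  qed
  moreover have "c' \<le> h"
  proof (rule ccontr)
    assume "\<not> c' \<le> h"
    then have hc: "h < c'" by simp
    define s where "s = (c' + h)/(c' - h) + 1"
    have sp: "s > 1" using hc h c'p by (simp add: s_def)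
    have "HF G 1 s \<le> HF G 1 0 + HF G 0 s" using sp by (intro tri) auto
    also have "HF G 0 s = HF G s 0" using sp by (intro symm) auto
    also have "HF G 1 0 + HF G s 0 = ennreal (h + s * h)" using s0[of s] sp h
      by (simp add: ennreal_plus[symmetric] del: ennreal_plus)
    finally have "ennreal (c' * (s - 1)) \<le> ennreal (h + s * h)" using Fpos[of s] sp by simp
    then have le: "c' * (s - 1) \<le> h + s * h" using h sp by (subst (asm) ennreal_le_iff) auto
    have "(c' + h) = (s - 1) * (c' - h)" using hc by (simp add: s_def field_simps)
    then have e2: "s * c' - s * h = 2 * c'" by (simp add: algebra_simps)
    have le': "s * c' - c' \<le> h + s * h" using le by (simp add: algebra_simps)
    show False using le' e2 hc by linarith
  qed
  ultimately have hc: "h = c'" by simp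
  have "HF G r t = ennreal (c' * \<bar>r - t\<bar>)" if r: "r \<ge> 0" and t: "t \<ge> 0" for r t
  proof (cases "r > 0")
    case True
    have "HF G r t = HF G (r*1) (r*(t/r))" using True by simp
    also have "\<dots> = ennreal r * HF G 1 (t/r)" using True t by (intro HF_scale[OF G]) auto
    also have "HF G 1 (t/r) = ennreal (c' * \<bar>t/r - 1\<bar>)"
    proof (cases "t > 0")
      case True then show ?thesis using Fpos \<open>r > 0\<close> by simp
    next
      case False then show ?thesis using t h hc by simp
    qed
    also have "ennreal r * ennreal (c' * \<bar>t/r - 1\<bar>) = ennreal (c' * (r * \<bar>t/r - 1\<bar>))"
      using True c' by (simp add: ennreal_mult[symmetric] ac_simps)
    also have "r * \<bar>t/r - 1\<bar> = \<bar>r - t\<bar>"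
    proof -
      have "r * \<bar>t/r - 1\<bar> = \<bar>r * (t/r - 1)\<bar>" using True by (simp add: abs_mult)
      also have "r * (t/r - 1) = t - r" using True by (simp add: field_simps)
      finally show ?thesis by simp
    qed
    finally show ?thesis .
  next
    case False
    then have r0: "r = 0" using r by simp
    show ?thesis
    proof (cases "t > 0")
      case True
      have "HF G r t = HF G t 0" using r0 t by (simp add: symm)
      also have "\<dots> = ennreal (t * c')" using s0[OF True] hc by simp
      finally show ?thesis using r0 True by (simp add: mult.commute)
    next
      case False
      then show ?thesis using r0 t zero[of 0 0] by simp
    qed
  qed
  then show ?thesis using c'p by blast
qed

theorem mainTheorem5:
  shows "(\<forall>F\<in>Gamma0. (\<forall>s\<ge>0. T1 F s = F s) \<longleftrightarrow>
            (\<exists>c::ennreal. \<forall>s\<ge>0. F s = c * ennreal \<bar>s - 1\<bar>))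
       \<and> (\<forall>G\<in>Gamma0. is_metric_nonneg (HF G) \<longleftrightarrow>
            (\<exists>c::real. 0 < c \<and> (\<forall>r\<ge>0. \<forall>t\<ge>0. HF G r t = ennreal (c * \<bar>r - t\<bar>))))"
proof (intro conjI ballI iffI)
  fix F assume F: "F \<in> Gamma0"
  show "\<forall>s\<ge>0. T1 F s = F s \<Longrightarrow> \<exists>c::ennreal. \<forall>s\<ge>0. F s = c * ennreal \<bar>s - 1\<bar>"
    by (rule part1_fwd[OF F])
  show "\<exists>c::ennreal. \<forall>s\<ge>0. F s = c * ennreal \<bar>s - 1\<bar> \<Longrightarrow> \<forall>s\<ge>0. T1 F s = F s"
    using part1_bwd[OF F] by blast
next
  fix G assume G: "G \<in> Gamma0"
  show "is_metric_nonneg (HF G) \<Longrightarrow> \<exists>c::real. 0 < c \<and> (\<forall>r\<ge>0. \<forall>t\<ge>0. HF G r t = ennreal (c * \<bar>r - t\<bar>))"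
    by (rule part2_fwd[OF G])
  show "\<exists>c::real. 0 < c \<and> (\<forall>r\<ge>0. \<forall>t\<ge>0. HF G r t = ennreal (c * \<bar>r - t\<bar>)) \<Longrightarrow> is_metric_nonneg (HF G)"
    using part2_bwd by blast
qed

end
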